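(* Let $f:\mathbb{R}^n\to\mathbb{R}$ be convex and differentiable with $\nabla f$ $L$-Lipschitz continuous, and assume $X^*$ is non-empty. Then the sequence $\{x^k\}$ generated by Algorithm 3 (run without stopping, with $\nabla f(x^k)\ne0$ for all $k$) converges to a point of $X^*$.
   Context: $X^*=\{x:\nabla f(x)=0\}$ (the set of minimizers of the convex $f$). Algorithm 3: parameters $0<\mu<\nu<1$, $0<\underline{h}<1\le\gamma_0^0\le\overline{h}<\frac4L$, $0\le\beta\le1$, $\theta\in(0,1)$, $\tau>1$, $\eta\in(0,2)$, starting point $x^0$; run while $\nabla f(x^k)\neq0$. At iteration $k$: for $\gamma>0$ let $z^k(\gamma)=x^k-\gamma\nabla f(x^k)$ and $r_k(\gamma)=\gamma\|\nabla f(z^k(\gamma))-\nabla f(x^k)\|/\|z^k(\gamma)-x^k\|$; starting from $\gamma_0^k$, while $r_k(\gamma_l^k)>\nu$ set $\gamma_{l+1}^k=\gamma_l^k\theta\min\{1,1/r_k(\gamma_l^k)\}$; let $h_k$ be the first $\gamma_l^k$ with $r_k(\gamma_l^k)\le\nu$. Then $z^k=x^k-h_k\nabla f(x^k)$ and $x^{k+1}=x^k-\eta\alpha_kh_k\big(\nabla f(x^k)-\beta(\nabla f(x^k)-\nabla f(z^k))\big)$ with $$\alpha_k=\frac{(1-\beta)\left(1-\frac{Lh_k}{4}\right)\|x^k-z^k\|^2+\beta\langle x^k-z^k,h_k\nabla f(z^k)\rangle}{h_k^2\|\nabla f(x^k)-\beta(\nabla f(x^k)-\nabla f(z^k))\|^2};$$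 finally $\gamma_0^{k+1}=\mathbf{P}_{[\underline{h},\overline{h}]}(\tau h_k)$ if $r_k(h_k)\le\mu$, else $\gamma_0^{k+1}=\mathbf{P}_{[\underline{h},\overline{h}]}(h_k)$, where $\mathbf{P}_{[a,b]}$ is projection onto $[a,b]$. *)

theory Defs
  imports "HOL-Analysis.Analysis"
begin

text \<open>Algorithm 3. The gradient of f is passed as the function g.\<close>

definition alg3_r :: "('a::real_normed_vector \<Rightarrow> 'a) \<Rightarrow> 'a \<Rightarrow> real \<Rightarrow> real" where
  "alg3_r g x \<gamma> =
     (let z = x - \<gamma> *\<^sub>R g x in \<gamma> * norm (g z - g x) / norm (z - x))"

fun alg3_ls :: "('a::real_normed_vector \<Rightarrow> 'a) \<Rightarrow> real \<Rightarrow> 'a \<Rightarrow> real \<Rightarrow> nat \<Rightarrow> real" where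
  "alg3_ls g \<theta> x \<gamma>0 0 = \<gamma>0"
| "alg3_ls g \<theta> x \<gamma>0 (Suc l) =
     (let \<gamma> = alg3_ls g \<theta> x \<gamma>0 l in \<gamma> * \<theta> * min 1 (1 / alg3_r g x \<gamma>))"

definition alg3_h :: "('a::real_normed_vector \<Rightarrow> 'a) \<Rightarrow> real \<Rightarrow> real \<Rightarrow> 'a \<Rightarrow> real \<Rightarrow> real" where
  "alg3_h g \<nu> \<theta> x \<gamma>0 =
     alg3_ls g \<theta> x \<gamma>0 (LEAST l. alg3_r g x (alg3_ls g \<theta> x \<gamma>0 l) \<le> \<nu>)"

definition proj_interval :: "real \<Rightarrow> real \<Rightarrow> real \<Rightarrow> real" where
  "proj_interval a b t = max a (min b t)"

definition alg3_step ::
  "('a::real_inner \<Rightarrow> 'a) \<Rightarrow> real \<Rightarrow> real \<Rightarrow> real \<Rightarrow> real \<Rightarrow> real \<Rightarrow> real \<Rightarrow> real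
     \<Rightarrow> real \<Rightarrow> real \<Rightarrow> 'a \<times> real \<Rightarrow> 'a \<times> real" where
  "alg3_step g L \<mu> \<nu> hlo hup \<beta> \<theta> \<tau> \<eta> s =
     (let x = fst s; \<gamma>0 = snd s;
          h = alg3_h g \<nu> \<theta> x \<gamma>0;
          z = x - h *\<^sub>R g x;
          d = g x - \<beta> *\<^sub>R (g x - g z);
          \<alpha> = ((1 - \<beta>) * (1 - L * h / 4) * (norm (x - z))\<^sup>2 + \<beta> * inner (x - z) (h *\<^sub>R g z))
              / (h\<^sup>2 * (norm d)\<^sup>2);
          x' = x - (\<eta> * \<alpha> * h) *\<^sub>R d;
          \<gamma>0' = (if alg3_r g x h \<le> \<mu> then proj_interval hlo hup (\<tau> * h)
                 else proj_interval hlo hup h)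
      in (x', \<gamma>0'))"

fun alg3 ::
  "('a::real_inner \<Rightarrow> 'a) \<Rightarrow> real \<Rightarrow> real \<Rightarrow> real \<Rightarrow> real \<Rightarrow> real \<Rightarrow> real \<Rightarrow> real
     \<Rightarrow> real \<Rightarrow> real \<Rightarrow> 'a \<Rightarrow> real \<Rightarrow> nat \<Rightarrow> 'a \<times> real" where
  "alg3 g L \<mu> \<nu> hlo hup \<beta> \<theta> \<tau> \<eta> x0 \<gamma>00 0 = (x0, \<gamma>00)"
| "alg3 g L \<mu> \<nu> hlo hup \<beta> \<theta> \<tau> \<eta> x0 \<gamma>00 (Suc k) =
     alg3_step g L \<mu> \<nu> hlo hup \<beta> \<theta> \<tau> \<eta> (alg3 g L \<mu> \<nu> hlo hup \<beta> \<theta> \<tau> \<eta> x0 \<gamma>00 k)"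

end

theory Submission
  imports Defs
begin

lemma phi_deriv:
  fixes f :: "'a::real_inner \<Rightarrow> real"
  assumes grad: "\<And>x. GDERIV f x :> g x"
  shows "((\<lambda>t. f (x + t *\<^sub>R v)) has_real_derivative inner v (g (x + t *\<^sub>R v))) (at t)"
proof -
  have l: "((\<lambda>t. x + t *\<^sub>R v) has_derivative (\<lambda>s. s *\<^sub>R v)) (at t)"
    by (auto intro!: derivative_eq_intros)
  have "(f has_derivative (\<lambda>h. inner h (g (x + t *\<^sub>R v)))) (at (x + t *\<^sub>R v))"
    using grad[of "x + t *\<^sub>R v"] by (simp add: gderiv_def)
  from has_derivative_compose[OF l this]
  have "((\<lambda>t. f (x + t *\<^sub>R v)) has_derivative (\<lambda>s. inner (s *\<^sub>R v) (g (x + t *\<^sub>R v)))) (at t)" .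
  moreover have "(\<lambda>s. inner (s *\<^sub>R v) (g (x + t *\<^sub>R v))) = (*) (inner v (g (x + t *\<^sub>R v)))"
    by (auto simp: mult.commute)
  ultimately show ?thesis by (simp add: has_field_derivative_def)
qed

lemma tangent:
  fixes f :: "'a::real_inner \<Rightarrow> real"
  assumes convex: "convex_on UNIV f" and grad: "\<And>x. GDERIV f x :> g x"
  shows "f x + inner (g x) (y - x) \<le> f y"
proof -
  define \<phi> where "\<phi> t = f (x + t *\<^sub>R (y - x))" for t :: real
  have cphi: "convex_on UNIV \<phi>"
  proof (rule convex_onI)
    fix t a b :: real assume "0 < t" "t < 1"
    have "x + ((1 - t) *\<^sub>R a + t *\<^sub>R b) *\<^sub>R (y - x)
        = (1 - t) *\<^sub>R (x + a *\<^sub>R (y - x)) + t *\<^sub>R (x + b *\<^sub>R (y - x))"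
      by (simp add: algebra_simps)
    then show "\<phi> ((1 - t) *\<^sub>R a + t *\<^sub>R b) \<le> (1 - t) * \<phi> a + t * \<phi> b"
      unfolding \<phi>_def using convexD_alt convex_onD[OF convex, of t] \<open>0 < t\<close> \<open>t < 1\<close> by simp
  qed simp
  have d: "(\<phi> has_real_derivative inner (y - x) (g x)) (at 0 within UNIV)"
    unfolding \<phi>_def using phi_deriv[OF grad, of x "y - x" 0] by simp
  have "\<phi> 1 - \<phi> 0 \<ge> inner (y - x) (g x) * (1 - 0)"
    by (rule convex_on_imp_above_tangent[OF cphi _ _ _ d]) auto
  then show ?thesis by (simp add: \<phi>_def inner_commute)
qed

lemma descent:
  fixes f :: "'a::real_inner \<Rightarrow> real"
  assumes grad: "\<And>x. GDERIV f x :> g x"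
    and lipschitz: "\<And>x y. norm (g x - g y) \<le> L * norm (x - y)"
  shows "f y \<le> f x + inner (g x) (y - x) + L / 2 * (norm (y - x))\<^sup>2"
proof -
  define v where "v = y - x"
  define \<psi> where "\<psi> t = f (x + t *\<^sub>R v) - t * inner (g x) v - L / 2 * t\<^sup>2 * (norm v)\<^sup>2" for t
  have "\<psi> 0 \<ge> \<psi> 1"
  proof (rule DERIV_nonpos_imp_nonincreasing[where f=\<psi>])
    fix t :: real assume t: "0 \<le> t" "t \<le> 1"
    have D: "(\<psi> has_real_derivative
        inner v (g (x + t *\<^sub>R v)) - inner (g x) v - L / 2 * (2 * t) * (norm v)\<^sup>2) (at t)"
      unfolding \<psi>_def
      by (rule phi_deriv[OF grad] derivative_eq_intros refl | simp)+
    have "inner v (g (x + t *\<^sub>R v)) - inner (g x) v = inner v (g (x + t *\<^sub>R v) - g x)"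
      by (simp add: inner_diff_right inner_commute)
    also have "\<dots> \<le> norm v * norm (g (x + t *\<^sub>R v) - g x)"
      by (rule norm_cauchy_schwarz)
    also have "\<dots> \<le> norm v * (L * (t * norm v))"
      using lipschitz[of "x + t *\<^sub>R v" x] t by (intro mult_left_mono) auto
    finally have "\<exists>y. (\<psi> has_real_derivative y) (at t) \<and> y \<le> 0"
      using D by (intro exI[of _ "inner v (g (x + t *\<^sub>R v)) - inner (g x) v - L / 2 * (2 * t) * (norm v)\<^sup>2"])
        (auto simp: power2_eq_square algebra_simps)
    then show "\<exists>y. (\<psi> has_real_derivative y) (at t) \<and> y \<le> 0" .
  qed simp
  then show ?thesis by (simp add: \<psi>_def v_def)
qed


lemma cocoercive_aux:
  fixes f :: "'a::real_inner \<Rightarrow> real"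
  assumes convex: "convex_on UNIV f" and grad: "\<And>x. GDERIV f x :> g x"
    and lipschitz: "\<And>x y. norm (g x - g y) \<le> L * norm (x - y)" and L: "L > 0"
  shows "f x + inner (g x) (y - x) + (norm (g y - g x))\<^sup>2 / (2 * L) \<le> f y"
proof -
  define e where "e = g y - g x"
  define w where "w = y - (1 / L) *\<^sub>R e"
  have 1: "f x + inner (g x) (w - x) \<le> f w" by (rule tangent[OF convex grad])
  have 2: "f w \<le> f y + inner (g y) (w - y) + L / 2 * (norm (w - y))\<^sup>2"
    by (rule descent[OF grad lipschitz])
  have wx: "inner (g x) (w - x) = inner (g x) (y - x) - (1 / L) * inner (g x) e"
    by (simp add: w_def inner_diff_right algebra_simps)
  have wy: "inner (g y) (w - y) = - (1 / L) * inner (g y) e"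
    by (simp add: w_def inner_diff_right algebra_simps)
  have nwy: "(norm (w - y))\<^sup>2 = (1 / L)\<^sup>2 * (norm e)\<^sup>2"
    using L by (simp add: w_def power_divide)
  have ee: "inner (g y) e - inner (g x) e = (norm e)\<^sup>2"
    by (simp add: e_def power2_norm_eq_inner inner_diff_left)
  have "f x + inner (g x) (y - x) - (1 / L) * inner (g x) e
      \<le> f y - (1 / L) * inner (g y) e + L / 2 * ((1 / L)\<^sup>2 * (norm e)\<^sup>2)"
    using 1[unfolded wx] 2[unfolded wy nwy] by linarith
  then have "f x + inner (g x) (y - x) + (1 / L) * (inner (g y) e - inner (g x) e)
      - L / 2 * ((1 / L)\<^sup>2 * (norm e)\<^sup>2) \<le> f y"
    by (simp add: algebra_simps)
  moreover have "(1 / L) * (inner (g y) e - inner (g x) e) - L / 2 * ((1 / L)\<^sup>2 * (norm e)\<^sup>2)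
      = (norm e)\<^sup>2 / (2 * L)"
    using L unfolding ee by (simp add: field_simps power2_eq_square)
  ultimately show ?thesis by (simp add: e_def algebra_simps)
qed

lemma cocoercive:
  fixes f :: "'a::real_inner \<Rightarrow> real"
  assumes convex: "convex_on UNIV f" and grad: "\<And>x. GDERIV f x :> g x"
    and lipschitz: "\<And>x y. norm (g x - g y) \<le> L * norm (x - y)" and L: "L > 0"
  shows "(norm (g x - g y))\<^sup>2 / L \<le> inner (g x - g y) (x - y)"
proof -
  have a: "f x + inner (g x) (y - x) + (norm (g y - g x))\<^sup>2 / (2 * L) \<le> f y"
    by (rule cocoercive_aux[OF assms])
  have b: "f y + inner (g y) (x - y) + (norm (g x - g y))\<^sup>2 / (2 * L) \<le> f x"
    by (rule cocoercive_aux[OF assms])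
  have n: "norm (g y - g x) = norm (g x - g y)" by (rule norm_minus_commute)
  have i: "inner (g x - g y) (x - y) = - inner (g x) (y - x) - inner (g y) (x - y)"
    by (simp add: inner_diff_left inner_diff_right algebra_simps)
  have "(norm (g x - g y))\<^sup>2 / L = (norm (g x - g y))\<^sup>2 / (2 * L) + (norm (g x - g y))\<^sup>2 / (2 * L)"
    by (simp add: field_simps)
  then show ?thesis using a[unfolded n] b i by linarith
qed


lemma r_eq:
  fixes g :: "'a::real_normed_vector \<Rightarrow> 'a"
  assumes "g x \<noteq> 0" "\<gamma> > 0"
  shows "alg3_r g x \<gamma> = norm (g (x - \<gamma> *\<^sub>R g x) - g x) / norm (g x)"
  using assms by (simp add: alg3_r_def Let_def)

lemma r_le:
  fixes g :: "'a::real_normed_vector \<Rightarrow> 'a"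
  assumes lipschitz: "\<And>x y. norm (g x - g y) \<le> L * norm (x - y)"
    and "g x \<noteq> 0" "\<gamma> > 0"
  shows "alg3_r g x \<gamma> \<le> L * \<gamma>" "alg3_r g x \<gamma> \<ge> 0"
proof -
  have "norm (g (x - \<gamma> *\<^sub>R g x) - g x) \<le> L * (\<gamma> * norm (g x))"
    using lipschitz[of "x - \<gamma> *\<^sub>R g x" x] assms by simp
  then show "alg3_r g x \<gamma> \<le> L * \<gamma>" using assms
    by (simp add: r_eq divide_le_eq)
  show "alg3_r g x \<gamma> \<ge> 0" using assms by (simp add: r_eq)
qed

lemma linesearch:
  fixes g :: "'a::real_normed_vector \<Rightarrow> 'a"
  assumes lipschitz: "\<And>x y. norm (g x - g y) \<le> L * norm (x - y)"
    and L: "L > 0" and gx: "g x \<noteq> 0" and g0: "0 < \<gamma>0"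
    and th: "0 < \<theta>" "\<theta> < 1" and nu: "0 < \<nu>" "\<nu> < 1"
  shows "alg3_r g x (alg3_h g \<nu> \<theta> x \<gamma>0) \<le> \<nu>"
    "min \<gamma>0 (\<theta> * \<nu> / L) \<le> alg3_h g \<nu> \<theta> x \<gamma>0"
    "alg3_h g \<nu> \<theta> x \<gamma>0 \<le> \<gamma>0"
proof -
  define G where "G = alg3_ls g \<theta> x \<gamma>0"
  define r where "r = alg3_r g x"
  have step: "G (Suc l) = G l * \<theta> * min 1 (1 / r (G l))" for l
    by (simp add: G_def r_def Let_def)
  have A: "(\<forall>j<l. r (G j) > \<nu>) \<longrightarrow> 0 < G l \<and> G l \<le> \<theta> ^ l * \<gamma>0" for l
  proof (induction l)
    case 0 then show ?case using g0 by (simp add: G_def)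
  next
    case (Suc l)
    show ?case
    proof
      assume H: "\<forall>j<Suc l. \<nu> < r (G j)"
      then have IH: "0 < G l" "G l \<le> \<theta> ^ l * \<gamma>0" using Suc by auto
      have rl: "r (G l) > \<nu>" using H by auto
      then have m: "0 < min 1 (1 / r (G l))" "min 1 (1 / r (G l)) \<le> 1" using nu by auto
      have "0 < G l * \<theta> * min 1 (1 / r (G l))" using IH m th by simp
      moreover have "G l * \<theta> * min 1 (1 / r (G l)) \<le> G l * \<theta>"
        using IH m th by (simp add: mult_left_le)
      moreover have "G l * \<theta> \<le> \<theta> ^ Suc l * \<gamma>0" using IH th by (simp add: algebra_simps)
      ultimately show "0 < G (Suc l) \<and> G (Suc l) \<le> \<theta> ^ Suc l * \<gamma>0"
        unfolding step by linarith
    qed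
  qed
  have ex: "\<exists>l. r (G l) \<le> \<nu>"
  proof (rule ccontr)
    assume "\<not> ?thesis"
    then have all: "\<forall>j. r (G j) > \<nu>" by (auto simp: not_le)
    obtain n where n: "\<theta> ^ n < \<nu> / (L * \<gamma>0)"
      using real_arch_pow_inv[of "\<nu> / (L * \<gamma>0)" \<theta>] nu L g0 th by auto
    have "0 < G n \<and> G n \<le> \<theta> ^ n * \<gamma>0" using A[of n] all by auto
    then have a1: "L * G n \<le> L * (\<theta> ^ n * \<gamma>0)" using L by (intro mult_left_mono) auto
    have a2: "\<nu> < r (G n)" using all by auto
    have a3: "r (G n) \<le> L * G n" using r_le(1)[OF lipschitz gx, of "G n"] \<open>0 < G n \<and> _\<close> unfolding r_def by auto
    have a4: "\<theta> ^ n * (L * \<gamma>0) < \<nu>" using n L g0 by (simp add: less_divide_eq)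
    have "L * (\<theta> ^ n * \<gamma>0) = \<theta> ^ n * (L * \<gamma>0)" by simp
    then have False using a1 a2 a3 a4 by linarith
    then show False by simp
  qed
  define l where "l = (LEAST l. r (G l) \<le> \<nu>)"
  have h: "alg3_h g \<nu> \<theta> x \<gamma>0 = G l"
    by (simp only: alg3_h_def G_def r_def l_def)
  have rl: "r (G l) \<le> \<nu>" unfolding l_def using LeastI_ex[OF ex] .
  have before: "\<forall>j<l. r (G j) > \<nu>"
  proof (intro allI impI)
    fix j assume "j < l"
    then have "\<not> r (G j) \<le> \<nu>" unfolding l_def by (rule not_less_Least)
    then show "r (G j) > \<nu>" by simp
  qed
  have Gl: "0 < G l" "G l \<le> \<theta> ^ l * \<gamma>0" using A[of l] before by auto
  show "alg3_r g x (alg3_h g \<nu> \<theta> x \<gamma>0) \<le> \<nu>" using rl h r_def by simp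
  have "\<theta> ^ l \<le> 1" using th by (simp add: power_le_one)
  then have "\<theta> ^ l * \<gamma>0 \<le> \<gamma>0" using g0 by (simp add: mult_left_le_one_le)
  then show "alg3_h g \<nu> \<theta> x \<gamma>0 \<le> \<gamma>0" using h Gl by simp
  show "min \<gamma>0 (\<theta> * \<nu> / L) \<le> alg3_h g \<nu> \<theta> x \<gamma>0"
  proof (cases l)
    case 0 then show ?thesis using h by (simp add: G_def)
  next
    case (Suc m)
    have Gm: "0 < G m" using A[of m] before Suc by auto
    have rm: "r (G m) > \<nu>" using before Suc by auto
    have rmL: "r (G m) \<le> L * G m" using r_le(1)[OF lipschitz gx Gm] r_def by simp
    have "\<theta> * \<nu> / L \<le> G m * \<theta> * min 1 (1 / r (G m))"
    proof (cases "r (G m) \<le> 1")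
      case True
      then have "min 1 (1 / r (G m)) = 1" using rm nu by simp
      moreover have "\<nu> / L \<le> G m"
      proof -
        have "L * G m = G m * L" by simp
        then have "\<nu> \<le> G m * L" using rm rmL by linarith
        then show ?thesis using L by (simp add: divide_le_eq)
      qed
      moreover have "\<theta> * (\<nu> / L) \<le> \<theta> * G m" using th \<open>\<nu> / L \<le> G m\<close> by (intro mult_left_mono) auto
      ultimately show ?thesis by (simp add: algebra_simps)
    next
      case False
      then have "min 1 (1 / r (G m)) = 1 / r (G m)" by simp
      have rpos: "r (G m) > 0" using rm nu by simp
      have "L * G m = G m * L" by simp
      then have "r (G m) \<le> G m * L" using rmL by linarith
      then have "r (G m) / L \<le> G m" using L by (simp add: divide_le_eq)
      then have "1 / L \<le> G m / r (G m)" using rpos L by (simp add: le_divide_eq)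
      moreover have "\<nu> / L \<le> 1 / L" using nu L by (simp add: divide_right_mono)
      ultimately have "\<nu> / L \<le> G m * (1 / r (G m))" by simp
      then have "\<theta> * (\<nu> / L) \<le> \<theta> * (G m * (1 / r (G m)))" using th by (intro mult_left_mono) auto
      then show ?thesis using \<open>min 1 (1 / r (G m)) = 1 / r (G m)\<close> by (simp add: algebra_simps)
    qed
    then show ?thesis using h Suc step by simp
  qed
qed


lemma relaxed_proj:
  fixes x p u :: "'a::real_inner"
  assumes u: "u \<noteq> 0" and ip: "s \<le> inner u (x - p)" and s: "0 \<le> s" and eta: "0 \<le> \<eta>"
  shows "(norm (x - (\<eta> * (s / (norm u)\<^sup>2)) *\<^sub>R u - p))\<^sup>2
         \<le> (norm (x - p))\<^sup>2 - \<eta> * (2 - \<eta>) * (s\<^sup>2 / (norm u)\<^sup>2)"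
proof -
  define t where "t = \<eta> * (s / (norm u)\<^sup>2)"
  have t0: "0 \<le> t" using eta s by (simp add: t_def)
  have nu: "(norm u)\<^sup>2 > 0" using u by simp
  have "(norm (x - t *\<^sub>R u - p))\<^sup>2 = (norm (x - p))\<^sup>2 - 2 * t * inner u (x - p) + t\<^sup>2 * (norm u)\<^sup>2"
    unfolding power2_norm_eq_inner
    by (simp add: inner_diff_left inner_diff_right inner_commute algebra_simps power2_eq_square)
  also have "\<dots> \<le> (norm (x - p))\<^sup>2 - 2 * t * s + t\<^sup>2 * (norm u)\<^sup>2"
    using ip t0 by (simp add: mult_left_mono)
  also have "\<dots> = (norm (x - p))\<^sup>2 - \<eta> * (2 - \<eta>) * (s\<^sup>2 / (norm u)\<^sup>2)"
    using nu unfolding t_def by (simp add: field_simps power2_eq_square)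
  finally show ?thesis by (simp add: t_def)
qed


lemma step_lemma:
  fixes f :: "'a::real_inner \<Rightarrow> real"
  assumes convex: "convex_on UNIV f" and grad: "\<And>x. GDERIV f x :> g x"
    and lipschitz: "\<And>x y. norm (g x - g y) \<le> L * norm (x - y)" and L: "L > 0"
    and nu: "0 < \<nu>" "\<nu> < 1" and th: "0 < \<theta>" "\<theta> < 1"
    and hl: "0 < hlo" "hup < 4 / L" and be: "0 \<le> \<beta>" "\<beta> \<le> 1" and eta: "0 < \<eta>" "\<eta> < 2"
    and gx: "g x \<noteq> 0" and g0: "hlo \<le> \<gamma>0" "\<gamma>0 \<le> hup" and gp: "g p = 0"
  shows "(norm (fst (alg3_step g L \<mu> \<nu> hlo hup \<beta> \<theta> \<tau> \<eta> (x, \<gamma>0)) - p))\<^sup>2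
     \<le> (norm (x - p))\<^sup>2 - \<eta> * (2 - \<eta>) * ((min hlo (\<theta> * \<nu> / L)) * min (1 - \<nu>) (1 - L * hup / 4) / 2)\<^sup>2 * (norm (g x))\<^sup>2"
proof -
  define hm where "hm = min hlo (\<theta> * \<nu> / L)"
  define c1 where "c1 = min (1 - \<nu>) (1 - L * hup / 4)"
  define h where "h = alg3_h g \<nu> \<theta> x \<gamma>0"
  have g0pos: "0 < \<gamma>0" using hl g0 by simp
  have rh: "alg3_r g x h \<le> \<nu>" and hlow: "min \<gamma>0 (\<theta> * \<nu> / L) \<le> h" and hup': "h \<le> \<gamma>0"
    using linesearch[OF lipschitz L gx g0pos th nu] unfolding h_def by auto
  have hmh: "hm \<le> h" using hlow g0 unfolding hm_def by linarith
  have hm0: "0 < hm" using hl th nu L unfolding hm_def by simp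
  have hpos: "0 < h" using hmh hm0 by simp
  have hh: "h \<le> hup" using hup' g0 by simp
  have "L * hup < 4" using hl L by (simp add: less_divide_eq mult.commute)
  moreover have Lhh: "L * h \<le> L * hup" using hh L by (intro mult_left_mono) auto
  ultimately have Lh: "L * h < 4" by simp
  have c1pos: "0 < c1" unfolding c1_def using nu L hl by (simp add: less_divide_eq mult.commute)
  define z where "z = x - h *\<^sub>R g x"
  define e where "e = g z - g x"
  define d where "d = g x - \<beta> *\<^sub>R (g x - g z)"
  define num where "num = (1 - \<beta>) * (1 - L * h / 4) * (norm (x - z))\<^sup>2 + \<beta> * inner (x - z) (h *\<^sub>R g z)"
  define u where "u = h *\<^sub>R d"
  define n where "n = norm (g x)"
  have npos: "0 < n" using gx by (simp add: n_def)
  have en: "norm e \<le> \<nu> * n"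
    using rh r_eq[of g x h, OF gx hpos] npos by (simp add: e_def z_def n_def divide_le_eq)
  have dd: "d = g x + \<beta> *\<^sub>R e" by (simp add: d_def e_def algebra_simps)
  have be_e: "norm (\<beta> *\<^sub>R e) \<le> \<nu> * n"
  proof -
    have "norm (\<beta> *\<^sub>R e) = \<beta> * norm e" using be by simp
    also have "\<dots> \<le> 1 * norm e" using be by (intro mult_right_mono) auto
    finally show ?thesis using en by simp
  qed
  have nn: "\<nu> * n \<le> 1 * n" using nu npos by (intro mult_right_mono) auto
  have dup: "norm d \<le> 2 * n"
    using norm_triangle_ineq[of "g x" "\<beta> *\<^sub>R e"] be_e nn unfolding dd n_def by linarith
  have dlow: "(1 - \<nu>) * n \<le> norm d"
    using norm_triangle_ineq2[of "g x" "- (\<beta> *\<^sub>R e)"] be_e unfolding dd n_def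
    by (simp add: algebra_simps)
  have dpos: "0 < norm d" using dlow nu npos by (smt (verit) mult_pos_pos)
  have gxgz: "(1 - \<nu>) * n\<^sup>2 \<le> inner (g x) (g z)"
  proof -
    have "inner (g x) (g z) = n\<^sup>2 + inner (g x) e"
      by (simp add: e_def n_def inner_diff_right power2_norm_eq_inner)
    moreover have "- (n * norm e) \<le> inner (g x) e"
      using norm_cauchy_schwarz[of "g x" "- e"] by (simp add: n_def)
    moreover have "n * norm e \<le> n * (\<nu> * n)" using en npos by (intro mult_left_mono) auto
    ultimately show ?thesis by (simp add: power2_eq_square algebra_simps)
  qed
  define Q where "Q = (1 - \<beta>) * (1 - L * h / 4) * n\<^sup>2 + \<beta> * inner (g x) (g z)"
  have numQ: "num = h\<^sup>2 * Q"
    unfolding num_def Q_def z_def n_def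
    by (simp add: power_mult_distrib abs_of_pos[OF hpos] algebra_simps power2_eq_square)
  have Qlow: "c1 * n\<^sup>2 \<le> Q"
  proof -
    have a: "c1 * n\<^sup>2 \<le> (1 - L * h / 4) * n\<^sup>2"
    proof (rule mult_right_mono)
      show "c1 \<le> 1 - L * h / 4" unfolding c1_def using Lhh by linarith
    qed simp
    have b: "c1 * n\<^sup>2 \<le> inner (g x) (g z)"
      using gxgz unfolding c1_def by (smt (verit) mult_right_mono zero_le_power2)
    have "(1 - \<beta>) * (c1 * n\<^sup>2) \<le> (1 - \<beta>) * ((1 - L * h / 4) * n\<^sup>2)" using a be by (intro mult_left_mono) auto
    moreover have "\<beta> * (c1 * n\<^sup>2) \<le> \<beta> * inner (g x) (g z)" using b be by (intro mult_left_mono) auto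
    ultimately show ?thesis unfolding Q_def by (simp add: algebra_simps)
  qed
  have Qpos: "0 \<le> Q" using Qlow c1pos by (smt (verit) mult_nonneg_nonneg zero_le_power2)
  have numpos: "0 \<le> num" using numQ Qpos by simp
  have cx: "n\<^sup>2 / L \<le> inner (g x) (x - p)"
    using cocoercive[OF convex grad lipschitz L, of x p] gp by (simp add: n_def)
  have cz: "0 \<le> inner (g z) (z - p)"
    using cocoercive[OF convex grad lipschitz L, of z p] gp L
    by (smt (verit) divide_nonneg_pos zero_le_power2 diff_zero)
  have xp: "x - p = (z - p) + h *\<^sub>R g x" by (simp add: z_def)
  have i1: "h\<^sup>2 * (1 - L * h / 4) * n\<^sup>2 \<le> h * inner (g x) (x - p)"
  proof -
    have "h * (1 - L * h / 4) \<le> 1 / L"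
    proof -
      have "0 \<le> (1 - L * h / 2)\<^sup>2" by simp
      then have "L * (h * (1 - L * h / 4)) \<le> 1" by (simp add: power2_eq_square algebra_simps)
      then show ?thesis using L by (simp add: le_divide_eq mult.commute)
    qed
    then have "h * (h * (1 - L * h / 4)) * n\<^sup>2 \<le> h * (1 / L) * n\<^sup>2"
      using hpos by (intro mult_right_mono mult_left_mono) auto
    also have "\<dots> = h * (n\<^sup>2 / L)" by simp
    also have "\<dots> \<le> h * inner (g x) (x - p)" using cx hpos by (intro mult_left_mono) auto
    finally show ?thesis by (simp add: power2_eq_square algebra_simps)
  qed
  have i2: "h\<^sup>2 * inner (g x) (g z) \<le> h * inner (g z) (x - p)"
  proof -
    have "inner (g z) (x - p) = inner (g z) (z - p) + h * inner (g x) (g z)"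
      unfolding xp by (simp add: inner_add_right inner_commute)
    then have "h * inner (g x) (g z) \<le> inner (g z) (x - p)" using cz by simp
    then have "h * (h * inner (g x) (g z)) \<le> h * inner (g z) (x - p)" using hpos by (intro mult_left_mono) auto
    then show ?thesis by (simp add: power2_eq_square algebra_simps)
  qed
  have ip: "num \<le> inner u (x - p)"
  proof -
    have "inner u (x - p) = (1 - \<beta>) * (h * inner (g x) (x - p)) + \<beta> * (h * inner (g z) (x - p))"
      unfolding u_def d_def by (simp add: inner_diff_left algebra_simps)
    moreover have "(1 - \<beta>) * (h\<^sup>2 * (1 - L * h / 4) * n\<^sup>2) \<le> (1 - \<beta>) * (h * inner (g x) (x - p))"
      using i1 be by (intro mult_left_mono) auto
    moreover have "\<beta> * (h\<^sup>2 * inner (g x) (g z)) \<le> \<beta> * (h * inner (g z) (x - p))"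
      using i2 be by (intro mult_left_mono) auto
    ultimately show ?thesis unfolding numQ Q_def by (simp add: algebra_simps)
  qed
  have u0: "u \<noteq> 0" using hpos dpos by (simp add: u_def)
  have nu2: "(norm u)\<^sup>2 = h\<^sup>2 * (norm d)\<^sup>2" using hpos by (simp add: u_def power_mult_distrib)
  have xstep: "fst (alg3_step g L \<mu> \<nu> hlo hup \<beta> \<theta> \<tau> \<eta> (x, \<gamma>0)) = x - (\<eta> * (num / (norm u)\<^sup>2)) *\<^sub>R u"
    unfolding alg3_step_def Let_def fst_conv snd_conv
    unfolding h_def[symmetric] z_def[symmetric] d_def[symmetric] num_def[symmetric] nu2
    by (simp add: u_def algebra_simps)
  have main: "(norm (fst (alg3_step g L \<mu> \<nu> hlo hup \<beta> \<theta> \<tau> \<eta> (x, \<gamma>0)) - p))\<^sup>2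
         \<le> (norm (x - p))\<^sup>2 - \<eta> * (2 - \<eta>) * (num\<^sup>2 / (norm u)\<^sup>2)"
    unfolding xstep by (rule relaxed_proj[OF u0 ip numpos]) (use eta in simp)
  have ratio: "hm * c1 * n / 2 \<le> num / norm u"
  proof -
    have nu': "norm u = h * norm d" using hpos by (simp add: u_def)
    have "num / norm u = h * Q / norm d" using hpos dpos unfolding nu' numQ by (simp add: power2_eq_square)
    moreover have "h * (c1 * n\<^sup>2) \<le> h * Q" using Qlow hpos by (intro mult_left_mono) auto
    moreover have "h * (c1 * n\<^sup>2) / (2 * n) \<le> h * (c1 * n\<^sup>2) / norm d"
      using dup dpos hpos c1pos npos by (intro divide_left_mono) auto
    moreover have "h * (c1 * n\<^sup>2) / (2 * n) = h * c1 * n / 2" using npos by (simp add: power2_eq_square)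
    moreover have "hm * c1 * n / 2 \<le> h * c1 * n / 2" using hmh c1pos npos by (simp add: divide_right_mono mult_right_mono)
    ultimately show ?thesis using dpos by (smt (verit) divide_right_mono)
  qed
  have "(hm * c1 * n / 2)\<^sup>2 \<le> (num / norm u)\<^sup>2"
    using ratio hm0 c1pos npos by (intro power_mono) auto
  then have "(hm * c1 / 2)\<^sup>2 * n\<^sup>2 \<le> num\<^sup>2 / (norm u)\<^sup>2" by (simp add: power_divide power_mult_distrib)
  then have "\<eta> * (2 - \<eta>) * ((hm * c1 / 2)\<^sup>2 * n\<^sup>2) \<le> \<eta> * (2 - \<eta>) * (num\<^sup>2 / (norm u)\<^sup>2)"
    using eta by (intro mult_left_mono) auto
  then show ?thesis using main unfolding hm_def[symmetric] c1_def[symmetric] n_def[symmetric]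
    by (simp add: algebra_simps)
qed


lemma step_snd:
  assumes "hlo \<le> hup"
  shows "hlo \<le> snd (alg3_step g L \<mu> \<nu> hlo hup \<beta> \<theta> \<tau> \<eta> s) \<and> snd (alg3_step g L \<mu> \<nu> hlo hup \<beta> \<theta> \<tau> \<eta> s) \<le> hup"
proof -
  have pr: "hlo \<le> proj_interval hlo hup t \<and> proj_interval hlo hup t \<le> hup" for t
    using assms by (simp add: proj_interval_def)
  have "\<exists>b a c. snd (alg3_step g L \<mu> \<nu> hlo hup \<beta> \<theta> \<tau> \<eta> s) = (if b then proj_interval hlo hup a else proj_interval hlo hup c)"
    unfolding alg3_step_def Let_def snd_conv by (intro exI) (rule refl)
  then obtain b a c where "snd (alg3_step g L \<mu> \<nu> hlo hup \<beta> \<theta> \<tau> \<eta> s) = (if b then proj_interval hlo hup a else proj_interval hlo hup c)"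
    by blast
  then show ?thesis using pr by (cases b) auto
qed

theorem theorem5:
  fixes f :: "real ^ 'n \<Rightarrow> real" and g :: "real ^ 'n \<Rightarrow> real ^ 'n"
    and L \<mu> \<nu> hlo hup \<gamma>00 \<beta> \<theta> \<tau> \<eta> :: real and x0 :: "real ^ 'n"
  assumes convex: "convex_on UNIV f"
    and grad: "\<And>x. GDERIV f x :> g x"
    and lipschitz: "\<And>x y. norm (g x - g y) \<le> L * norm (x - y)"
    and nonempty: "{x. g x = 0} \<noteq> {}"
    and params: "0 < \<mu>" "\<mu> < \<nu>" "\<nu> < 1"
      "0 < hlo" "hlo < 1" "1 \<le> \<gamma>00" "\<gamma>00 \<le> hup" "hup < 4 / L"
      "0 \<le> \<beta>" "\<beta> \<le> 1" "0 < \<theta>" "\<theta> < 1" "1 < \<tau>" "0 < \<eta>" "\<eta> < 2"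
    and nonstop: "\<And>k. g (fst (alg3 g L \<mu> \<nu> hlo hup \<beta> \<theta> \<tau> \<eta> x0 \<gamma>00 k)) \<noteq> 0"
  shows "\<exists>xs \<in> {x. g x = 0}.
           (\<lambda>k. fst (alg3 g L \<mu> \<nu> hlo hup \<beta> \<theta> \<tau> \<eta> x0 \<gamma>00 k)) \<longlonglongrightarrow> xs"
proof -
  define X where "X k = fst (alg3 g L \<mu> \<nu> hlo hup \<beta> \<theta> \<tau> \<eta> x0 \<gamma>00 k)" for k
  define \<Gamma> where "\<Gamma> k = snd (alg3 g L \<mu> \<nu> hlo hup \<beta> \<theta> \<tau> \<eta> x0 \<gamma>00 k)" for k
  have pair: "alg3 g L \<mu> \<nu> hlo hup \<beta> \<theta> \<tau> \<eta> x0 \<gamma>00 k = (X k, \<Gamma> k)" for k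
    by (simp add: X_def \<Gamma>_def)
  have Lpos: "L > 0"
  proof (rule ccontr)
    assume "\<not> L > 0"
    then have "4 / L \<le> 0" by (simp add: divide_nonpos_nonneg)
    then show False using params by linarith
  qed
  have hlohup: "hlo \<le> hup" using params by linarith
  have inv: "hlo \<le> \<Gamma> k \<and> \<Gamma> k \<le> hup" for k
  proof (induction k)
    case 0 then show ?case using params by (simp add: \<Gamma>_def)
  next
    case (Suc k)
    show ?case unfolding \<Gamma>_def alg3.simps using step_snd[OF hlohup] by blast
  qed
  define C where "C = \<eta> * (2 - \<eta>) * ((min hlo (\<theta> * \<nu> / L)) * min (1 - \<nu>) (1 - L * hup / 4) / 2)\<^sup>2"
  have Cpos: "C > 0"
  proof -
    have m1: "0 < min hlo (\<theta> * \<nu> / L)" using params Lpos by simp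
    have "L * hup < 4" using params Lpos by (simp add: less_divide_eq mult.commute)
    then have m2: "0 < min (1 - \<nu>) (1 - L * hup / 4)" using params by simp
    have "0 < (min hlo (\<theta> * \<nu> / L)) * min (1 - \<nu>) (1 - L * hup / 4) / 2"
      using m1 m2 by simp
    then have "0 < ((min hlo (\<theta> * \<nu> / L)) * min (1 - \<nu>) (1 - L * hup / 4) / 2)\<^sup>2"
      by (rule zero_less_power)
    moreover have "0 < \<eta> * (2 - \<eta>)" using params by simp
    ultimately show ?thesis unfolding C_def by simp
  qed
  have fej: "(norm (X (Suc k) - p))\<^sup>2 \<le> (norm (X k - p))\<^sup>2 - C * (norm (g (X k)))\<^sup>2"
    if gp: "g p = 0" for k p
  proof -
    have "(norm (fst (alg3_step g L \<mu> \<nu> hlo hup \<beta> \<theta> \<tau> \<eta> (X k, \<Gamma> k)) - p))\<^sup>2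
      \<le> (norm (X k - p))\<^sup>2 - C * (norm (g (X k)))\<^sup>2"
      unfolding C_def
      by (rule step_lemma[OF convex grad lipschitz Lpos])
        (use params inv[of k] nonstop[of k] gp in \<open>auto simp: X_def\<close>)
    then show ?thesis by (simp add: X_def[of "Suc k"] pair[symmetric])
  qed
  have dec: "norm (X (Suc k) - p) \<le> norm (X k - p)" if gp: "g p = 0" for k p
  proof -
    have "(norm (X (Suc k) - p))\<^sup>2 \<le> (norm (X k - p))\<^sup>2"
      using fej[OF gp, of k] Cpos by (smt (verit) mult_nonneg_nonneg zero_le_power2)
    then show ?thesis by (rule power2_le_imp_le) simp
  qed
  have decs: "decseq (\<lambda>k. norm (X k - p))" if gp: "g p = 0" for p
    by (rule decseq_SucI) (rule dec[OF gp])
  obtain p0 where p0: "g p0 = 0" using nonempty by auto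
  have bnd: "norm (X k - p0) \<le> norm (X 0 - p0)" for k
    using decseqD[OF decs[OF p0], of 0 k] by simp
  define a where "a k = (norm (X k - p0))\<^sup>2" for k
  have adec: "decseq a" unfolding a_def by (rule decseq_SucI) (use fej[OF p0] Cpos in \<open>smt (verit) mult_nonneg_nonneg zero_le_power2\<close>)
  obtain la where la: "a \<longlonglongrightarrow> la"
    using decseq_convergent[OF adec, of 0] unfolding a_def by auto
  have "(\<lambda>k. sqrt ((a k - a (Suc k)) / C)) \<longlonglongrightarrow> sqrt ((la - la) / C)"
    using Cpos by (intro tendsto_intros la LIMSEQ_Suc[OF la]) simp
  then have z: "(\<lambda>k. sqrt ((a k - a (Suc k)) / C)) \<longlonglongrightarrow> 0" by simp
  have gnorm: "norm (g (X k)) \<le> sqrt ((a k - a (Suc k)) / C)" for k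
  proof (rule real_le_rsqrt)
    show "(norm (g (X k)))\<^sup>2 \<le> (a k - a (Suc k)) / C"
      using fej[OF p0, of k] Cpos unfolding a_def by (simp add: le_divide_eq mult.commute)
  qed
  have g0: "(\<lambda>k. g (X k)) \<longlonglongrightarrow> 0"
    by (rule Lim_null_comparison[OF _ z]) (simp add: gnorm)
  have "bounded (range X)"
    unfolding bounded_def
    by (rule exI[of _ p0], rule exI[of _ "norm (X 0 - p0)"]) (use bnd in \<open>auto simp: dist_norm norm_minus_commute[of p0]\<close>)
  then obtain xb r where r: "strict_mono r" and xr: "(X \<circ> r) \<longlonglongrightarrow> xb"
    using bounded_imp_convergent_subsequence by blast
  have gxb: "g xb = 0"
  proof -
    have "(\<lambda>k. g (X (r k)) - g xb) \<longlonglongrightarrow> 0"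
    proof (rule Lim_null_comparison)
      show "\<forall>\<^sub>F k in sequentially. norm (g (X (r k)) - g xb) \<le> L * norm (X (r k) - xb)"
        by (simp add: lipschitz)
      have "(\<lambda>k. X (r k) - xb) \<longlonglongrightarrow> 0" using xr by (simp add: LIM_zero_iff comp_def)
      then have "(\<lambda>k. norm (X (r k) - xb)) \<longlonglongrightarrow> 0" by (simp add: tendsto_norm_zero_iff)
      then show "(\<lambda>k. L * norm (X (r k) - xb)) \<longlonglongrightarrow> 0"
        using tendsto_mult_right_zero by blast
    qed
    then have A: "(\<lambda>k. g (X (r k))) \<longlonglongrightarrow> g xb" by (simp add: LIM_zero_iff)
    have B: "(\<lambda>k. g (X (r k))) \<longlonglongrightarrow> 0"
      using LIMSEQ_subseq_LIMSEQ[OF g0 r] by (simp add: comp_def)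
    show ?thesis using LIMSEQ_unique[OF A B] .
  qed
  have "X \<longlonglongrightarrow> xb"
  proof (rule LIMSEQ_I)
    fix e :: real assume e: "0 < e"
    obtain K where K: "\<forall>k\<ge>K. norm ((X \<circ> r) k - xb) < e" using LIMSEQ_D[OF xr e] by blast
    show "\<exists>no. \<forall>n\<ge>no. norm (X n - xb) < e"
    proof (intro exI allI impI)
      fix n assume "r K \<le> n"
      then have "norm (X n - xb) \<le> norm (X (r K) - xb)" using decseqD[OF decs[OF gxb]] by blast
      then show "norm (X n - xb) < e" using K by auto
    qed
  qed
  then show ?thesis using gxb unfolding X_def by auto
qed

end
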